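(* Let $\mathbf{A},\mathbf{B},\mathbf{C}$ be trees with $\mathbf{A}$ finite. If $\mathbf{A}\mathbf{B}=\mathbf{A}\mathbf{C}$, then $[\mathbf{B}]_{\operatorname{depth}(\mathbf{A})}=[\mathbf{C}]_{\operatorname{depth}(\mathbf{A})}$.
   Context: A tree is a (possibly empty, possibly infinite) rooted in-tree in which every vertex has finitely many in-neighbours: an acyclic weakly connected digraph with a root having no outgoing arc, every other vertex having exactly one outgoing arc (to its parent), arcs directed towards the root. Trees are considered up to isomorphism. The depth of a vertex is its distance to the root; the depth of a tree is the supremum of the depths of its vertices ($-1$ for the empty tree, $\infty$ for an infinite tree). For $k\in\mathbb{N}\cup\{-1\}$, $[\mathbf{T}]_k$ is the subtree of vertices of depth at most $k$. The product of trees $\mathbf{F},\mathbf{G}$ has vertex set $\{(a,b):\operatorname{depth}(a)=\operatorname{depth}(b)\}$ and an arc $(a,b)\to(a',b')$ whenever $a\to a'$ and $b\to b'$ are arcs of $\mathbf{F}$ and $\mathbf{G}$ respectively. *)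

theory Defs
  imports Main
begin

text \<open>A digraph is a pair (V, E) of a vertex set and an arc set.
  Arcs point from a vertex to its parent (towards the root).\<close>
type_synonym 'a digraph = "'a set \<times> ('a \<times> 'a) set"

definition is_tree :: "'a digraph \<Rightarrow> bool" where
  "is_tree T \<longleftrightarrow>
     (let V = fst T; E = snd T in
        E \<subseteq> V \<times> V
      \<and> (V = {} \<or> (\<exists>r\<in>V. (\<forall>y. (r, y) \<notin> E) \<and> (\<forall>v\<in>V - {r}. \<exists>!w. (v, w) \<in> E)))
      \<and> acyclic E
      \<and> (\<forall>u\<in>V. \<forall>v\<in>V. (u, v) \<in> (E \<union> E\<inverse>)\<^sup>*)
      \<and> (\<forall>v\<in>V. finite {u. (u, v) \<in> E}))"

definition tree_root :: "'a digraph \<Rightarrow> 'a" where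
  "tree_root T = (THE r. r \<in> fst T \<and> (\<forall>y. (r, y) \<notin> snd T))"

definition vdepth :: "'a digraph \<Rightarrow> 'a \<Rightarrow> nat" where
  "vdepth T v = (LEAST n. (v, tree_root T) \<in> (snd T) ^^ n)"

definition fin_depth :: "'a digraph \<Rightarrow> int" where
  "fin_depth T = (if fst T = {} then -1 else int (Max (vdepth T ` fst T)))"

definition trunc :: "'a digraph \<Rightarrow> int \<Rightarrow> 'a digraph" where
  "trunc T k = (let V' = {v \<in> fst T. int (vdepth T v) \<le> k}
                in (V', snd T \<inter> (V' \<times> V')))"

definition tprod :: "'a digraph \<Rightarrow> 'b digraph \<Rightarrow> ('a \<times> 'b) digraph" where
  "tprod F G = (let V = {(a, b). a \<in> fst F \<and> b \<in> fst G \<and> vdepth F a = vdepth G b}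
                in (V, {((a, b), (a', b')). (a, b) \<in> V \<and> (a', b') \<in> V
                          \<and> (a, a') \<in> snd F \<and> (b, b') \<in> snd G}))"

definition dg_iso :: "'a digraph \<Rightarrow> 'b digraph \<Rightarrow> bool" where
  "dg_iso G H \<longleftrightarrow> (\<exists>f. bij_betw f (fst G) (fst H)
       \<and> (\<forall>u\<in>fst G. \<forall>v\<in>fst G. (u, v) \<in> snd G \<longleftrightarrow> (f u, f v) \<in> snd H))"

end

theory Submission
  imports Defs "HOL-Library.Multiset"
begin


locale tr =
  fixes V :: "'a set" and E :: "('a \<times> 'a) set" and r :: 'a
  assumes EV: "E \<subseteq> V \<times> V" and rV: "r \<in> V" and rsink: "\<And>y. (r, y) \<notin> E"
    and par: "\<And>v. v \<in> V \<Longrightarrow> v \<noteq> r \<Longrightarrow> \<exists>!w. (v, w) \<in> E"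
    and reach: "\<And>v. v \<in> V \<Longrightarrow> (v, r) \<in> E\<^sup>*"
    and fin: "\<And>v. finite {u. (u, v) \<in> E}"
begin

definition dep :: "'a \<Rightarrow> nat" where "dep v = (LEAST n. (v, r) \<in> E ^^ n)"

lemma sv: "(u, x) \<in> E \<Longrightarrow> (u, y) \<in> E \<Longrightarrow> x = y"
  using par EV rsink by blast

lemma pow_sv: "(u, x) \<in> E ^^ n \<Longrightarrow> (u, y) \<in> E ^^ n \<Longrightarrow> x = y"
proof (induction n arbitrary: u)
  case 0 then show ?case by simp
next
  case (Suc n)
  from relpow_Suc_D2[OF Suc.prems(1)] obtain a where a: "(u, a) \<in> E" "(a, x) \<in> E ^^ n" by blast
  from relpow_Suc_D2[OF Suc.prems(2)] obtain b where b: "(u, b) \<in> E" "(b, y) \<in> E ^^ n" by blast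
  from a b have "a = b" using sv by blast
  then show ?case using Suc.IH a b by blast
qed

lemma from_r: "(r, x) \<in> E ^^ n \<Longrightarrow> n = 0"
proof (cases n)
  case (Suc m)
  assume "(r, x) \<in> E ^^ n"
  then show ?thesis using relpow_Suc_D2[where x=r and z=x and R=E and n=m] Suc rsink by auto
qed simp

lemma len_unique_le: "(v, r) \<in> E ^^ n \<Longrightarrow> (v, r) \<in> E ^^ m \<Longrightarrow> n \<le> m \<Longrightarrow> n = m"
proof -
  assume a: "(v, r) \<in> E ^^ n" "(v, r) \<in> E ^^ m" "n \<le> m"
  then obtain k where k: "m = n + k" using le_Suc_ex by blast
  with a(2) obtain z where z: "(v, z) \<in> E ^^ n" "(z, r) \<in> E ^^ k" by (auto simp: relpow_add)
  then have "z = r" using pow_sv a(1) by blast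
  then have "k = 0" using z from_r by blast
  then show "n = m" using k by simp
qed

lemma len_unique: "(v, r) \<in> E ^^ n \<Longrightarrow> (v, r) \<in> E ^^ m \<Longrightarrow> n = m"
  using len_unique_le by (metis nat_le_linear)

lemma dep_eq: "(v, r) \<in> E ^^ n \<Longrightarrow> dep v = n"
  unfolding dep_def by (rule Least_equality) (auto dest: len_unique)

lemma dep_path: "v \<in> V \<Longrightarrow> (v, r) \<in> E ^^ dep v"
  using reach[of v] dep_eq by (metis rtrancl_power)

lemma inV1: "(u, v) \<in> E \<Longrightarrow> u \<in> V" using EV by auto
lemma inV2: "(u, v) \<in> E \<Longrightarrow> v \<in> V" using EV by auto

lemma dep_pow: "(u, v) \<in> E ^^ j \<Longrightarrow> v \<in> V \<Longrightarrow> dep u = j + dep v"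
  by (rule dep_eq) (auto simp: relpow_add dep_path)

lemma dep_E: "(u, v) \<in> E \<Longrightarrow> dep u = Suc (dep v)"
  using dep_pow[of u v 1] inV2 by auto

lemma dep_r: "dep r = 0" using dep_eq[of r 0] by simp

lemma dep0: "v \<in> V \<Longrightarrow> dep v = 0 \<longleftrightarrow> v = r"
  using dep_path dep_r by fastforce

lemma has_par: "v \<in> V \<Longrightarrow> v \<noteq> r \<Longrightarrow> \<exists>w. (v, w) \<in> E"
  using par by blast

end

lemma is_tree_tr:
  assumes "is_tree T" "fst T \<noteq> {}"
  shows "tr (fst T) (snd T) (tree_root T)"
proof -
  let ?V = "fst T" and ?E = "snd T"
  have EV: "?E \<subseteq> ?V \<times> ?V" using assms(1) by (simp add: is_tree_def Let_def)
  obtain r where r: "r \<in> ?V" "\<forall>y. (r, y) \<notin> ?E" "\<forall>v\<in>?V - {r}. \<exists>!w. (v, w) \<in> ?E"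
    using assms by (auto simp: is_tree_def Let_def)
  have conn: "\<forall>u\<in>?V. \<forall>v\<in>?V. (u, v) \<in> (?E \<union> ?E\<inverse>)\<^sup>*" using assms(1) by (simp add: is_tree_def Let_def)
  have fin: "\<forall>v\<in>?V. finite {u. (u, v) \<in> ?E}" using assms(1) by (simp add: is_tree_def Let_def)
  have root: "tree_root T = r"
    unfolding tree_root_def using r by (intro the_equality) auto
  have reach: "(v, r) \<in> ?E\<^sup>*" if "v \<in> ?V" for v
  proof -
    have "(r, v) \<in> (?E \<union> ?E\<inverse>)\<^sup>*" using conn r(1) that by blast
    then show ?thesis
    proof (induction rule: rtrancl_induct)
      case base then show ?case by simp
    next
      case (step y z)
      show ?case
      proof (cases "(z, y) \<in> ?E")
        case True then show ?thesis using step.IH by (meson rtrancl_into_rtrancl converse_rtrancl_into_rtrancl)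
      next
        case False
        then have yz: "(y, z) \<in> ?E" using step.hyps(2) by auto
        then have "y \<noteq> r" using r(2) by auto
        then obtain w where "(y, w) \<in> ?E" "(w, r) \<in> ?E\<^sup>*" using step.IH by (metis converse_rtranclE)
        moreover have "y \<in> ?V" using yz EV by auto
        ultimately have "(w, r) \<in> ?E\<^sup>*" "w = z" using r(3) yz \<open>y \<noteq> r\<close> by auto
        then show ?thesis by simp
      qed
    qed
  qed
  have fin2: "finite {u. (u, v) \<in> ?E}" for v
  proof (cases "v \<in> ?V")
    case True then show ?thesis using fin by auto
  next
    case False
    then have "{u. (u, v) \<in> ?E} = {}" using EV by auto
    then show ?thesis by simp
  qed
  show ?thesis unfolding root
    by unfold_locales (use EV r reach fin2 in auto)
qed

lemma vdepth_dep: "tr (fst T) (snd T) (tree_root T) \<Longrightarrow> vdepth T = tr.dep (snd T) (tree_root T)"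
  by (simp add: vdepth_def tr.dep_def fun_eq_iff)




lemma artin:
  fixes S :: "('x \<Rightarrow> nat) set" and op :: "'x \<Rightarrow> 'x \<Rightarrow> 'x" and n :: "('x \<Rightarrow> nat) \<Rightarrow> int"
  assumes "finite S" "\<forall>f\<in>S. f e = 1 \<and> (\<forall>x y. f (op x y) = f x * f y)"
    and "\<forall>x. (\<Sum>f\<in>S. n f * int (f x)) = 0"
  shows "\<forall>f\<in>S. n f = 0"
  using assms
proof (induction S arbitrary: n rule: finite_induct)
  case empty
  then show ?case by simp
next
  case (insert f1 S0)
  have H: "\<And>x. n f1 * int (f1 x) + (\<Sum>f\<in>S0. n f * int (f x)) = 0"
    using insert.prems(2) insert.hyps by simp
  have mult: "\<And>f x y. f \<in> insert f1 S0 \<Longrightarrow> f (op y x) = f y * f x"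
    using insert.prems(1) by blast
  have Z: "\<forall>f\<in>S0. n f * (int (f y) - int (f1 y)) = 0" for y
  proof (rule insert.IH)
    show "\<forall>f\<in>S0. f e = 1 \<and> (\<forall>x y. f (op x y) = f x * f y)" using insert.prems(1) by blast
    show "\<forall>x. (\<Sum>f\<in>S0. n f * (int (f y) - int (f1 y)) * int (f x)) = 0"
    proof
      fix x
      have a: "n f1 * int (f1 y) * int (f1 x) + (\<Sum>f\<in>S0. n f * int (f y) * int (f x)) = 0"
      proof -
        have "(\<Sum>f\<in>S0. n f * int (f (op y x))) = (\<Sum>f\<in>S0. n f * int (f y) * int (f x))"
          by (intro sum.cong) (auto simp: mult)
        then show ?thesis using H[of "op y x"] mult[of f1] by (simp add: mult.assoc)
      qed
      have b: "n f1 * int (f1 y) * int (f1 x) + int (f1 y) * (\<Sum>f\<in>S0. n f * int (f x)) = 0"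
        using arg_cong[OF H[of x], of "\<lambda>z. int (f1 y) * z"] by (simp add: algebra_simps)
      have "(\<Sum>f\<in>S0. n f * (int (f y) - int (f1 y)) * int (f x))
          = (\<Sum>f\<in>S0. n f * int (f y) * int (f x)) - int (f1 y) * (\<Sum>f\<in>S0. n f * int (f x))"
        by (simp add: algebra_simps sum_subtractf sum_distrib_left)
      then show "(\<Sum>f\<in>S0. n f * (int (f y) - int (f1 y)) * int (f x)) = 0" using a b by simp
    qed
  qed
  have S0z: "\<forall>f\<in>S0. n f = 0"
  proof
    fix f assume f: "f \<in> S0"
    then have "f \<noteq> f1" using insert.hyps by auto
    then obtain y where "f y \<noteq> f1 y" by auto
    then show "n f = 0" using Z[of y] f by auto
  qed
  have "n f1 * int (f1 e) = 0" using H[of e] S0z by simp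
  moreover have "f1 e = 1" using insert.prems(1) by auto
  ultimately show ?case using S0z by auto
qed

lemma sum_mset_count:
  fixes g :: "'a \<Rightarrow> nat"
  assumes "finite T"
  shows "int (\<Sum>f\<in>#P. g f) = (\<Sum>f\<in>set_mset P \<union> T. int (count P f) * int (g f))"
  using assms
proof (induction P arbitrary: T)
  case empty then show ?case by simp
next
  case (add x P)
  have "(\<Sum>f\<in>set_mset (add_mset x P) \<union> T. int (count (add_mset x P) f) * int (g f))
     = (\<Sum>f\<in>set_mset P \<union> (insert x T). int (count P f) * int (g f) + (if f = x then int (g f) else 0))"
    by (intro sum.cong) (auto simp: algebra_simps)
  also have "\<dots> = (\<Sum>f\<in>set_mset P \<union> (insert x T). int (count P f) * int (g f)) + int (g x)"
    using add.prems by (simp add: sum.distrib)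
  also have "\<dots> = int (\<Sum>f\<in>#P. g f) + int (g x)" using add.IH[of "insert x T"] add.prems by simp
  finally show ?case by simp
qed

lemma artin_mset:
  fixes P Q :: "('x \<Rightarrow> nat) multiset"
  assumes "\<forall>f\<in>set_mset P \<union> set_mset Q. f e = 1 \<and> (\<forall>x y. f (op x y) = f x * f y)"
    and "\<forall>x. (\<Sum>f\<in>#P. f x) = (\<Sum>f\<in>#Q. f x)"
  shows "P = Q"
proof -
  let ?S = "set_mset P \<union> set_mset Q"
  have "\<forall>f\<in>?S. (\<lambda>f. int (count P f) - int (count Q f)) f = 0"
  proof (rule artin[where op = op and e = e])
    show "\<forall>x. (\<Sum>f\<in>?S. (int (count P f) - int (count Q f)) * int (f x)) = 0"
    proof
      fix x
      have "int (\<Sum>f\<in>#P. f x) = (\<Sum>f\<in>?S. int (count P f) * int (f x))"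
        using sum_mset_count[where T="set_mset Q" and P=P and g="\<lambda>f. f x"] by simp
      moreover have "int (\<Sum>f\<in>#Q. f x) = (\<Sum>f\<in>?S. int (count Q f) * int (f x))"
        using sum_mset_count[where T="set_mset P" and P=Q and g="\<lambda>f. f x"] by (simp add: Un_commute)
      ultimately show "(\<Sum>f\<in>?S. (int (count P f) - int (count Q f)) * int (f x)) = 0"
        using assms(2) by (simp add: algebra_simps sum_subtractf)
    qed
  qed (use assms in auto)
  then show ?thesis
    by (metis (no_types, lifting) UnCI count_inI eq_iff_diff_eq_0 multiset_eqI of_nat_eq_iff)
qed

datatype rt = N (kids: "rt multiset")

primrec hom :: "rt \<Rightarrow> rt \<Rightarrow> nat" where
  "hom (N M) = (\<lambda>t. prod_mset (image_mset (\<lambda>h. sum_mset (image_mset h (kids t))) (image_mset hom M)))"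

primrec ht :: "rt \<Rightarrow> nat" where
  "ht (N M) = Max (insert 0 (Suc ` set_mset (image_mset ht M)))"

lemma hom_N: "hom (N M) t = (\<Prod>y\<in>#M. \<Sum>c\<in>#kids t. hom y c)"
  by (simp add: image_mset.compositionality comp_def)
declare hom.simps[simp del]

lemma ht_lt: assumes "y \<in># M" shows "ht y < ht (N M)"
proof -
  have "Suc (ht y) \<le> Max (insert 0 (Suc ` ht ` set_mset M))"
    using assms by (intro Max_ge) auto
  then show ?thesis by simp
qed
lemma hom_unit: "hom (N {#}) c = 1" by (simp add: hom_N)
lemma ht_le: "ht (N M) \<le> k \<longleftrightarrow> (\<forall>y\<in>#M. ht y < k)"
  by auto

lemma hom_join: "hom (N (kids x + kids y)) c = hom x c * hom y c"
  by (cases x; cases y) (simp add: hom_N)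

lemma hom_det: "(\<forall>x. hom x s = hom x t) \<Longrightarrow> s = t"
proof (induction s arbitrary: t)
  case (N M)
  obtain M' where t: "t = N M'" by (cases t)
  define \<chi> where "\<chi> = (\<lambda>c y. hom y c)"
  have "image_mset \<chi> M = image_mset \<chi> M'"
  proof (rule artin_mset[where e = "N {#}" and op = "\<lambda>x y. N (kids x + kids y)"])
    show "\<forall>f\<in>set_mset (image_mset \<chi> M) \<union> set_mset (image_mset \<chi> M').
       f (N {#}) = 1 \<and> (\<forall>x y. f (N (kids x + kids y)) = f x * f y)"
      by (auto simp: \<chi>_def hom_unit hom_join)
    show "\<forall>x. (\<Sum>f\<in>#image_mset \<chi> M. f x) = (\<Sum>f\<in>#image_mset \<chi> M'. f x)"
    proof
      fix y
      have "hom (N {#y#}) (N M) = hom (N {#y#}) t" using N.prems by blast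
      then show "(\<Sum>f\<in>#image_mset \<chi> M. f y) = (\<Sum>f\<in>#image_mset \<chi> M'. f y)"
        by (simp add: t hom_N \<chi>_def image_mset.compositionality comp_def)
    qed
  qed
  have injM: "\<And>c c'. c \<in># M \<Longrightarrow> \<chi> c = \<chi> c' \<Longrightarrow> c = c'"
    using N.IH unfolding \<chi>_def by (metis)
  have sub: "set_mset M' \<subseteq> set_mset M"
  proof
    fix c' assume "c' \<in># M'"
    then have "\<chi> c' \<in># image_mset \<chi> M" using \<open>image_mset \<chi> M = image_mset \<chi> M'\<close> by simp
    then obtain c where "c \<in># M" "\<chi> c' = \<chi> c" by auto
    then show "c' \<in># M" using injM by metis
  qed
  have inj: "inj_on \<chi> (set_mset M \<union> set_mset M')"
    using sub injM by (auto intro!: inj_onI)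
  have "M = M'"
    using image_mset_eq_image_mset_plusD[of \<chi> M M' "{#}"] inj \<open>image_mset \<chi> M = image_mset \<chi> M'\<close>
    by auto
  then show ?case using t by simp
qed




definition ch :: "'a digraph \<Rightarrow> 'a \<Rightarrow> 'a set" where "ch T v = {u. (u, v) \<in> snd T}"

fun code :: "'a digraph \<Rightarrow> nat \<Rightarrow> 'a \<Rightarrow> rt" where
  "code T 0 v = N {#}"
| "code T (Suc k) v = N (image_mset (code T k) (mset_set (ch T v)))"

lemma in_mset_set: "x \<in># mset_set S \<Longrightarrow> x \<in> S"
  by (cases "finite S") auto

lemma code_iso:
  assumes EG: "snd G \<subseteq> fst G \<times> fst G" and EH: "snd H \<subseteq> fst H \<times> fst H"
    and bij: "bij_betw f (fst G) (fst H)"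
    and arc: "\<forall>u\<in>fst G. \<forall>v\<in>fst G. (u, v) \<in> snd G \<longleftrightarrow> (f u, f v) \<in> snd H"
  shows "v \<in> fst G \<Longrightarrow> code G k v = code H k (f v)"
proof (induction k arbitrary: v)
  case 0 then show ?case by simp
next
  case (Suc k)
  have chG: "ch G v \<subseteq> fst G" using EG by (auto simp: ch_def)
  have "ch H (f v) = f ` ch G v"
  proof
    show "ch H (f v) \<subseteq> f ` ch G v"
    proof
      fix u' assume "u' \<in> ch H (f v)"
      then have u': "(u', f v) \<in> snd H" "u' \<in> fst H" using EH by (auto simp: ch_def)
      then obtain u where u: "u \<in> fst G" "u' = f u" using bij by (metis bij_betw_iff_bijections)
      then have "(u, v) \<in> snd G" using arc Suc.prems u'(1) by blast
      then show "u' \<in> f ` ch G v" using u by (auto simp: ch_def)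
    qed
    show "f ` ch G v \<subseteq> ch H (f v)"
      using arc Suc.prems chG by (auto simp: ch_def)
  qed
  moreover have "inj_on f (ch G v)" using bij chG by (meson bij_betw_def inj_on_subset)
  ultimately have "image_mset (code H k) (mset_set (ch H (f v))) = image_mset (code H k \<circ> f) (mset_set (ch G v))"
    by (simp add: image_mset_mset_set[symmetric] image_mset.compositionality)
  also have "\<dots> = image_mset (code G k) (mset_set (ch G v))"
    using Suc.IH chG by (intro image_mset_cong) (metis in_mset_set subsetD comp_apply)
  finally show ?case by simp
qed

lemma ch_tprod:
  assumes tA: "tr (fst A) (snd A) (tree_root A)" and tB: "tr (fst B) (snd B) (tree_root B)"
    and a: "a \<in> fst A" and b: "b \<in> fst B" and d: "vdepth A a = vdepth B b"
  shows "ch (tprod A B) (a, b) = ch A a \<times> ch B b"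
proof -
  have dA: "vdepth A a' = Suc (vdepth A a)" if "(a', a) \<in> snd A" for a'
    using tr.dep_E[OF tA that] vdepth_dep[OF tA] by simp
  have dB: "vdepth B b' = Suc (vdepth B b)" if "(b', b) \<in> snd B" for b'
    using tr.dep_E[OF tB that] vdepth_dep[OF tB] by simp
  show ?thesis
    using a b d dA dB tr.inV1[OF tA] tr.inV1[OF tB]
    by (auto simp: ch_def tprod_def Let_def)
qed

lemma hom_prod:
  assumes tA: "tr (fst A) (snd A) (tree_root A)" and tB: "tr (fst B) (snd B) (tree_root B)"
  shows "a \<in> fst A \<Longrightarrow> b \<in> fst B \<Longrightarrow> vdepth A a = vdepth B b \<Longrightarrow>
    hom x (code (tprod A B) k (a, b)) = hom x (code A k a) * hom x (code B k b)"
proof (induction k arbitrary: x a b)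
  case 0
  obtain M where x: "x = N M" by (cases x)
  show ?case by (cases "M = {#}") (auto simp: x hom_N nonempty_has_size)
next
  case (Suc k)
  obtain M where x: "x = N M" by (cases x)
  have finA: "finite (ch A a)" using tr.fin[OF tA] by (simp add: ch_def)
  have finB: "finite (ch B b)" using tr.fin[OF tB] by (simp add: ch_def)
  have chAB: "ch (tprod A B) (a, b) = ch A a \<times> ch B b" using ch_tprod[OF tA tB Suc.prems] .
  have inner: "(\<Sum>c\<in>#image_mset (code (tprod A B) k) (mset_set (ch (tprod A B) (a, b))). hom y c)
     = (\<Sum>c\<in>#image_mset (code A k) (mset_set (ch A a)). hom y c) *
       (\<Sum>c\<in>#image_mset (code B k) (mset_set (ch B b)). hom y c)" for y
  proof -
    have "(\<Sum>c\<in>#image_mset (code (tprod A B) k) (mset_set (ch (tprod A B) (a, b))). hom y c)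
        = (\<Sum>p\<in>ch A a \<times> ch B b. hom y (code (tprod A B) k p))"
      by (simp add: chAB sum_unfold_sum_mset image_mset.compositionality comp_def)
    also have "\<dots> = (\<Sum>p\<in>ch A a \<times> ch B b. hom y (code A k (fst p)) * hom y (code B k (snd p)))"
    proof (intro sum.cong refl)
      fix p assume p: "p \<in> ch A a \<times> ch B b"
      obtain a' b' where pp: "p = (a', b')" by (cases p)
      have e: "(a', a) \<in> snd A" "(b', b) \<in> snd B" using p pp by (auto simp: ch_def)
      have "vdepth A a' = vdepth B b'"
        using tr.dep_E[OF tA e(1)] tr.dep_E[OF tB e(2)] vdepth_dep[OF tA] vdepth_dep[OF tB] Suc.prems(3)
        by simp
      then show "hom y (code (tprod A B) k p) = hom y (code A k (fst p)) * hom y (code B k (snd p))"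
        using Suc.IH tr.inV1[OF tA e(1)] tr.inV1[OF tB e(2)] pp by simp
    qed
    also have "\<dots> = (\<Sum>a'\<in>ch A a. hom y (code A k a')) * (\<Sum>b'\<in>ch B b. hom y (code B k b'))"
      by (simp add: sum_product sum.cartesian_product case_prod_beta)
    finally show ?thesis
      by (simp add: sum_unfold_sum_mset image_mset.compositionality comp_def)
  qed
  show ?case
    unfolding x hom_N code.simps rt.sel inner by (rule prod_mset.distrib)
qed

lemma ht_code: "ht (code T k v) \<le> k"
proof (induction k arbitrary: v)
  case 0 then show ?case by simp
next
  case (Suc k)
  show ?case unfolding code.simps ht_le using Suc.IH by (auto simp: less_Suc_eq_le)
qed

lemma ht_attain: assumes "0 < ht (N M)" shows "\<exists>y\<in>#M. ht (N M) = Suc (ht y)"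
proof -
  let ?S = "insert 0 (Suc ` ht ` set_mset M)"
  have "Max ?S \<in> ?S" by (intro Max_in) auto
  then show ?thesis using assms by auto
qed

lemma hom_zero: "ht t < ht x \<Longrightarrow> hom x t = 0"
proof (induction x arbitrary: t)
  case (N M)
  have "0 < ht (N M)" using N.prems by simp
  then obtain y where y: "y \<in># M" "ht (N M) = Suc (ht y)" using ht_attain by blast
  have "hom y c = 0" if "c \<in># kids t" for c
  proof (rule N.IH[OF y(1)])
    have "ht c < ht (N (kids t))" using ht_lt that by blast
    then show "ht c < ht y" using N.prems y(2) by simp
  qed
  then have z: "(\<Sum>c\<in>#kids t. hom y c) = 0" by (intro sum_mset.neutral) auto
  obtain M' where Meq: "M = add_mset y M'" using y(1) by (blast dest: multi_member_split)
  have "hom (N M) t = (\<Sum>c\<in>#kids t. hom y c) * (\<Prod>y\<in>#M'. \<Sum>c\<in>#kids t. hom y c)"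
    unfolding hom_N Meq by (simp only: image_mset_add_mset prod_mset.add_mset)
  then show ?case using z by simp
qed

lemma prod_mset_pos: "(\<And>y. y \<in># M \<Longrightarrow> (0::nat) < f y) \<Longrightarrow> 0 < (\<Prod>y\<in>#M. f y)"
  by (induction M) auto

lemma hom_pos:
  assumes fin: "\<And>c. finite (ch T c)"
  shows "(w, v) \<in> snd T ^^ j \<Longrightarrow> ht x \<le> k \<Longrightarrow> ht x \<le> j \<Longrightarrow> 0 < hom x (code T k v)"
proof (induction k arbitrary: x v w j)
  case 0
  obtain M where x: "x = N M" by (cases x)
  have "M = {#}"
  proof (rule ccontr)
    assume "M \<noteq> {#}"
    then obtain y where "y \<in># M" by blast
    then have "ht y < ht x" using ht_lt x by simp
    then show False using "0.prems"(2) by simp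
  qed
  then show ?case by (simp add: x hom_N)
next
  case (Suc k)
  obtain M where x: "x = N M" by (cases x)
  show ?case
  proof (cases "M = {#}")
    case True then show ?thesis by (simp add: x hom_N)
  next
    case False
    then obtain y0 where "y0 \<in># M" by blast
    then have "0 < ht x" using ht_lt[of y0 M] x by simp
    then obtain j' where j: "j = Suc j'" using Suc.prems(3) by (cases j) auto
    have "(w, v) \<in> snd T ^^ Suc j'" using Suc.prems(1) j by simp
    then obtain c where c: "(w, c) \<in> snd T ^^ j'" "(c, v) \<in> snd T"
      by (rule relpow_Suc_E)
    have "c \<in> ch T v" using c(2) by (simp add: ch_def)
    then have cin: "code T k c \<in># image_mset (code T k) (mset_set (ch T v))"
      using fin[of v] by simp
    obtain R where Req: "image_mset (code T k) (mset_set (ch T v)) = add_mset (code T k c) R"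
      using cin by (blast dest: multi_member_split)
    have "0 < (\<Sum>c'\<in>#image_mset (code T k) (mset_set (ch T v)). hom y c')" if y: "y \<in># M" for y
    proof -
      have "ht y < ht x" using ht_lt[OF y] x by simp
      then have "0 < hom y (code T k c)" using Suc.IH[OF c(1)] Suc.prems(2,3) j by simp
      then show ?thesis unfolding Req by simp
    qed
    then show ?thesis unfolding x hom_N code.simps rt.sel
      by (rule prod_mset_pos)
  qed
qed




definition Dn :: "'a set \<Rightarrow> ('a \<times> 'a) set \<Rightarrow> 'a \<Rightarrow> nat \<Rightarrow> 'a set" where
  "Dn V E v k = {u \<in> V. \<exists>j\<le>k. (u, v) \<in> E ^^ j}"

context tr begin

lemma anc_unique: "(u, c) \<in> E ^^ j \<Longrightarrow> (u, c') \<in> E ^^ j' \<Longrightarrow> c \<in> V \<Longrightarrow> c' \<in> V \<Longrightarrow> dep c = dep c' \<Longrightarrow> c = c'"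
proof -
  assume a: "(u, c) \<in> E ^^ j" "(u, c') \<in> E ^^ j'" "c \<in> V" "c' \<in> V" "dep c = dep c'"
  then have "j = j'" using dep_pow[OF a(1) a(3)] dep_pow[OF a(2) a(4)] by simp
  then show "c = c'" using a pow_sv by blast
qed

lemma D_dep: "u \<in> Dn V E v k \<Longrightarrow> v \<in> V \<Longrightarrow> dep v \<le> dep u"
  unfolding Dn_def using dep_pow by fastforce

lemma D0: "v \<in> V \<Longrightarrow> Dn V E v 0 = {v}"
  unfolding Dn_def by auto

lemma D_self: "v \<in> V \<Longrightarrow> v \<in> Dn V E v k"
  unfolding Dn_def by (auto intro: exI[of _ 0])

lemma D_Suc: "v \<in> V \<Longrightarrow> Dn V E v (Suc k) = insert v (\<Union>c\<in>{c. (c, v) \<in> E}. Dn V E c k)"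
proof (intro equalityI subsetI)
  fix u assume v: "v \<in> V" and u: "u \<in> Dn V E v (Suc k)"
  then obtain j where j: "j \<le> Suc k" "(u, v) \<in> E ^^ j" "u \<in> V" by (auto simp: Dn_def)
  show "u \<in> insert v (\<Union>c\<in>{c. (c, v) \<in> E}. Dn V E c k)"
  proof (cases j)
    case 0 then show ?thesis using j by simp
  next
    case (Suc j')
    then obtain c where c: "(u, c) \<in> E ^^ j'" "(c, v) \<in> E" using j(2) by (auto elim: relpow_Suc_E)
    then show ?thesis using j Suc by (auto simp: Dn_def)
  qed
next
  fix u assume v: "v \<in> V" and u: "u \<in> insert v (\<Union>c\<in>{c. (c, v) \<in> E}. Dn V E c k)"
  show "u \<in> Dn V E v (Suc k)"
  proof (cases "u = v")
    case True then show ?thesis using D_self v by simp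
  next
    case False
    then obtain c j where c: "(c, v) \<in> E" "(u, c) \<in> E ^^ j" "j \<le> k" "u \<in> V" using u by (auto simp: Dn_def)
    then have "(u, v) \<in> E ^^ Suc j" by (rule_tac relpow_Suc_I)
    moreover have "Suc j \<le> Suc k" using c by simp
    ultimately show ?thesis using c unfolding Dn_def by blast
  qed
qed

lemma D_disj: "(c, v) \<in> E \<Longrightarrow> (c', v) \<in> E \<Longrightarrow> u \<in> Dn V E c k \<Longrightarrow> u \<in> Dn V E c' k' \<Longrightarrow> c = c'"
  unfolding Dn_def using anc_unique dep_E inV1 by (smt (verit) mem_Collect_eq)

lemma v_notin: "(c, v) \<in> E \<Longrightarrow> v \<notin> Dn V E c k"
  using D_dep dep_E inV1 by fastforce

lemma no_arc_up: "u' \<in> Dn V E v k \<Longrightarrow> v \<in> V \<Longrightarrow> (v, u') \<notin> E"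
  using D_dep dep_E by fastforce

lemma arc_to_v: "(c, v) \<in> E \<Longrightarrow> u \<in> Dn V E c k \<Longrightarrow> (u, v) \<in> E \<Longrightarrow> u = c"
proof -
  assume a: "(c, v) \<in> E" "u \<in> Dn V E c k" "(u, v) \<in> E"
  then obtain j where j: "(u, c) \<in> E ^^ j" by (auto simp: Dn_def)
  have "dep u = j + dep c" using dep_pow[OF j] inV1 a(1) by simp
  moreover have "dep u = dep c" using dep_E a(1) a(3) by simp
  ultimately have "j = 0" by simp
  then show "u = c" using j by simp
qed

lemma cross: "(c, v) \<in> E \<Longrightarrow> (c', v) \<in> E \<Longrightarrow> u \<in> Dn V E c k \<Longrightarrow> u' \<in> Dn V E c' k \<Longrightarrow> (u, u') \<in> E \<Longrightarrow> c = c'"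
proof -
  assume a: "(c, v) \<in> E" "(c', v) \<in> E" "u \<in> Dn V E c k" "u' \<in> Dn V E c' k" "(u, u') \<in> E"
  then obtain j j' where j: "(u, c) \<in> E ^^ j" "(u', c') \<in> E ^^ j'" by (auto simp: Dn_def)
  then have "(u, c') \<in> E ^^ Suc j'" using a(5) by (rule_tac relpow_Suc_I2)
  then show "c = c'" using anc_unique[OF j(1)] inV1 a(1,2) dep_E by metis
qed

lemma no_loop: "(v, v) \<notin> E"
  using dep_E by fastforce

end

lemma match:
  assumes "finite S" "finite T" "image_mset f (mset_set S) = image_mset g (mset_set T)"
  shows "\<exists>h. bij_betw h S T \<and> (\<forall>x\<in>S. g (h x) = f x)"
  using assms
proof (induction S arbitrary: T rule: finite_induct)
  case empty
  then have "T = {}" by (simp add: mset_set_empty_iff)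
  then show ?case by (intro exI[of _ "\<lambda>_. undefined"]) (simp add: bij_betw_def)
next
  case (insert x S0)
  have e: "image_mset g (mset_set T) = add_mset (f x) (image_mset f (mset_set S0))"
    using insert.prems(2) insert.hyps by simp
  have "f x \<in># image_mset g (mset_set T)" unfolding e by simp
  then obtain y where y: "y \<in> T" "g y = f x" using insert.prems(1) by auto
  have T: "T = insert y (T - {y})" using y by auto
  have "image_mset f (mset_set S0) = image_mset g (mset_set (T - {y}))"
  proof -
    have "mset_set T = add_mset y (mset_set (T - {y}))" using y insert.prems(1) by (metis mset_set.remove)
    then show ?thesis using e y by simp
  qed
  then obtain h0 where h0: "bij_betw h0 S0 (T - {y})" "\<forall>x\<in>S0. g (h0 x) = f x"
    using insert.IH insert.prems(1) by blast
  define h where "h = h0(x := y)"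
  have "bij_betw h S0 (T - {y})" using h0(1) insert.hyps(2) unfolding h_def
    by (rule_tac bij_betw_cong[THEN iffD1, OF _ h0(1)]) auto
  then have "bij_betw h (S0 \<union> {x}) ((T - {y}) \<union> {h x})"
    by (rule_tac notIn_Un_bij_betw) (use insert.hyps(2) h_def in auto)
  then have "bij_betw h (insert x S0) T" using y h_def by (metis T Un_insert_right fun_upd_same sup_bot_right)
  moreover have "\<forall>z\<in>insert x S0. g (h z) = f z" using h0(2) y insert.hyps(2) by (auto simp: h_def)
  ultimately show ?case by blast
qed


lemma iso_D:
  assumes B: "tr VB EB rB" and C: "tr VC EC rC"
  shows "v \<in> VB \<Longrightarrow> w \<in> VC \<Longrightarrow> code (VB, EB) k v = code (VC, EC) k w \<Longrightarrow>
    \<exists>\<phi>. bij_betw \<phi> (Dn VB EB v k) (Dn VC EC w k) \<and> \<phi> v = w \<and>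
      (\<forall>u\<in>Dn VB EB v k. \<forall>u'\<in>Dn VB EB v k. (u, u') \<in> EB \<longleftrightarrow> (\<phi> u, \<phi> u') \<in> EC)"
proof (induction k arbitrary: v w)
  case 0
  show ?case
    by (rule exI[of _ "\<lambda>_. w"])
      (simp add: tr.D0[OF B 0(1)] tr.D0[OF C 0(2)] tr.no_loop[OF B] tr.no_loop[OF C] bij_betw_def)
next
  case (Suc k)
  let ?DB = "Dn VB EB" and ?DC = "Dn VC EC"
  define chB where "chB = {c. (c, v) \<in> EB}"
  define chC where "chC = {c. (c, w) \<in> EC}"
  have finB: "finite chB" using tr.fin[OF B] chB_def by simp
  have finC: "finite chC" using tr.fin[OF C] chC_def by simp
  have "image_mset (code (VB, EB) k) (mset_set chB) = image_mset (code (VC, EC) k) (mset_set chC)"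
    using Suc.prems(3) by (simp add: chB_def chC_def ch_def)
  then obtain g where g: "bij_betw g chB chC" "\<And>c. c \<in> chB \<Longrightarrow> code (VC, EC) k (g c) = code (VB, EB) k c"
    using match[OF finB finC] by blast
  have chBV: "c \<in> VB" if "c \<in> chB" for c using that tr.inV1[OF B] chB_def by auto
  have gV: "g c \<in> VC" "(g c, w) \<in> EC" if "c \<in> chB" for c
    using that g(1) tr.inV1[OF C] chC_def by (auto dest: bij_betw_apply)
  let ?P = "\<lambda>c c' \<phi>. bij_betw \<phi> (?DB c k) (?DC c' k) \<and> \<phi> c = c' \<and>
      (\<forall>u\<in>?DB c k. \<forall>u'\<in>?DB c k. (u, u') \<in> EB \<longleftrightarrow> (\<phi> u, \<phi> u') \<in> EC)"
  define \<Phi> where "\<Phi> c = (SOME \<phi>. ?P c (g c) \<phi>)" for c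
  have P\<Phi>: "?P c (g c) (\<Phi> c)" if "c \<in> chB" for c
  proof -
    have "\<exists>\<phi>. ?P c (g c) \<phi>" using Suc.IH[OF chBV[OF that] gV(1)[OF that]] g(2)[OF that] by simp
    then show ?thesis unfolding \<Phi>_def by (rule someI_ex)
  qed
  define cv where "cv u = (THE c. c \<in> chB \<and> u \<in> ?DB c k)" for u
  have cv: "cv u = c" if "c \<in> chB" "u \<in> ?DB c k" for c u
    unfolding cv_def using that tr.D_disj[OF B] chB_def by (intro the_equality) auto
  define \<phi> where "\<phi> u = (if u = v then w else \<Phi> (cv u) u)" for u
  have \<phi>c: "\<phi> u = \<Phi> c u" if "c \<in> chB" "u \<in> ?DB c k" for c u
    using that cv tr.v_notin[OF B] chB_def unfolding \<phi>_def by auto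
  have img_c: "\<phi> ` ?DB c k = ?DC (g c) k" if "c \<in> chB" for c
  proof -
    have "\<phi> ` ?DB c k = \<Phi> c ` ?DB c k" using \<phi>c[OF that] by (rule image_cong[OF refl])
    also have "\<dots> = ?DC (g c) k" using P\<Phi>[OF that] by (simp add: bij_betw_def)
    finally show ?thesis .
  qed
  have \<phi>in: "\<phi> u \<in> ?DC (g c) k" if "c \<in> chB" "u \<in> ?DB c k" for c u
    using img_c[OF that(1)] that(2) by blast
  have DBS: "?DB v (Suc k) = insert v (\<Union>c\<in>chB. ?DB c k)"
    using tr.D_Suc[OF B Suc.prems(1)] chB_def by simp
  have DCS: "?DC w (Suc k) = insert w (\<Union>c\<in>chC. ?DC c k)"
    using tr.D_Suc[OF C Suc.prems(2)] chC_def by simp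
  have \<phi>v: "\<phi> v = w" by (simp add: \<phi>_def)
  have img: "\<phi> ` ?DB v (Suc k) = ?DC w (Suc k)"
  proof -
    have "\<phi> ` ?DB v (Suc k) = insert w (\<Union>c\<in>chB. \<phi> ` ?DB c k)"
      unfolding DBS by (simp add: \<phi>v image_UN)
    also have "\<dots> = insert w (\<Union>c\<in>chB. ?DC (g c) k)" using img_c by simp
    also have "\<dots> = insert w (\<Union>c'\<in>g ` chB. ?DC c' k)" by simp
    also have "\<dots> = ?DC w (Suc k)" using g(1) DCS by (simp add: bij_betw_def)
    finally show ?thesis .
  qed
  have gC: "g c' \<in> chC" if "c' \<in> chB" for c' using g(1) that by (auto dest: bij_betw_apply)
  have w_notin: "\<phi> u \<noteq> w" if "c \<in> chB" "u \<in> ?DB c k" for c u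
    using \<phi>in[OF that] tr.v_notin[OF C] gV(2)[OF that(1)] by auto
  have ginj: "g c1 = g c2 \<Longrightarrow> c1 \<in> chB \<Longrightarrow> c2 \<in> chB \<Longrightarrow> c1 = c2" for c1 c2
    using g(1) by (auto simp: bij_betw_def inj_on_def)
  have inj: "inj_on \<phi> (?DB v (Suc k))"
  proof (rule inj_onI)
    fix u1 u2 assume u1: "u1 \<in> ?DB v (Suc k)" and u2: "u2 \<in> ?DB v (Suc k)" and eq: "\<phi> u1 = \<phi> u2"
    show "u1 = u2"
    proof (cases "u1 = v")
      case True
      then show ?thesis using u2 eq w_notin \<phi>v unfolding DBS by (metis UN_E insertE)
    next
      case False
      then obtain c1 where c1: "c1 \<in> chB" "u1 \<in> ?DB c1 k" using u1 unfolding DBS by auto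
      show ?thesis
      proof (cases "u2 = v")
        case True
        then show ?thesis using eq w_notin[OF c1] \<phi>v by simp
      next
        case False
        then obtain c2 where c2: "c2 \<in> chB" "u2 \<in> ?DB c2 k" using u2 unfolding DBS by auto
        have "\<phi> u1 \<in> ?DC (g c1) k" "\<phi> u2 \<in> ?DC (g c2) k" using \<phi>in c1 c2 by auto
        then have "g c1 = g c2" using eq tr.D_disj[OF C] gV(2)[OF c1(1)] gV(2)[OF c2(1)] by metis
        then have "c1 = c2" using ginj c1 c2 by blast
        then show ?thesis using eq c1 c2 P\<Phi>[OF c1(1)] \<phi>c by (auto simp: bij_betw_def inj_on_def)
      qed
    qed
  qed
  have arcs: "(u, u') \<in> EB \<longleftrightarrow> (\<phi> u, \<phi> u') \<in> EC" if u: "u \<in> ?DB v (Suc k)" and u': "u' \<in> ?DB v (Suc k)" for u u'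
  proof (cases "u = v")
    case True
    have "(v, u') \<notin> EB" using tr.no_arc_up[OF B u' Suc.prems(1)] .
    moreover have "(w, \<phi> u') \<notin> EC" using tr.no_arc_up[OF C _ Suc.prems(2)] img u' by blast
    ultimately show ?thesis using True \<phi>v by simp
  next
    case False
    then obtain c where c: "c \<in> chB" "u \<in> ?DB c k" using u unfolding DBS by auto
    have cE: "(c, v) \<in> EB" using c(1) chB_def by simp
    show ?thesis
    proof (cases "u' = v")
      case True
      have "(u, v) \<in> EB \<longleftrightarrow> u = c" using tr.arc_to_v[OF B cE c(2)] cE by blast
      moreover have "(\<phi> u, w) \<in> EC \<longleftrightarrow> \<phi> u = g c"
        using tr.arc_to_v[OF C gV(2)[OF c(1)] \<phi>in[OF c]] gV(2)[OF c(1)] by metis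
      moreover have "\<phi> u = g c \<longleftrightarrow> u = c"
      proof -
        have cc: "c \<in> ?DB c k" using tr.D_self[OF B chBV[OF c(1)]] .
        have "\<phi> c = g c" using \<phi>c[OF c(1) cc] P\<Phi>[OF c(1)] by simp
        moreover have "inj_on (\<Phi> c) (?DB c k)" using P\<Phi>[OF c(1)] by (simp add: bij_betw_def)
        ultimately show ?thesis using \<phi>c[OF c(1)] c(2) cc by (metis inj_on_def)
      qed
      ultimately show ?thesis using True \<phi>v by simp
    next
      case False
      then obtain c' where c': "c' \<in> chB" "u' \<in> ?DB c' k" using u' unfolding DBS by auto
      have c'E: "(c', v) \<in> EB" using c'(1) chB_def by simp
      show ?thesis
      proof (cases "c = c'")
        case True
        then show ?thesis using P\<Phi>[OF c(1)] c c' \<phi>c by auto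
      next
        case False
        have "(u, u') \<notin> EB" using tr.cross[OF B cE c'E c(2) c'(2)] False by blast
        moreover have "(\<phi> u, \<phi> u') \<notin> EC"
        proof
          assume "(\<phi> u, \<phi> u') \<in> EC"
          then have "g c = g c'" using tr.cross[OF C gV(2)[OF c(1)] gV(2)[OF c'(1)] \<phi>in[OF c] \<phi>in[OF c']] by blast
          then show False using ginj c(1) c'(1) False by blast
        qed
        ultimately show ?thesis by simp
      qed
    qed
  qed
  show ?case
    using inj img \<phi>v arcs by (intro exI[of _ \<phi>]) (auto simp: bij_betw_def)
qed




lemma tprod_sink:
  assumes tA: "tr (fst A) (snd A) (tree_root A)" and tC: "tr (fst C) (snd C) (tree_root C)"
    and ac: "(a, c) \<in> fst (tprod A C)" and ns: "\<forall>y. ((a, c), y) \<notin> snd (tprod A C)"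
  shows "a = tree_root A \<and> c = tree_root C"
proof -
  have a: "a \<in> fst A" and c: "c \<in> fst C" and d: "vdepth A a = vdepth C c"
    using ac by (auto simp: tprod_def Let_def)
  have dA: "vdepth A = tr.dep (snd A) (tree_root A)" using vdepth_dep[OF tA] .
  have dC: "vdepth C = tr.dep (snd C) (tree_root C)" using vdepth_dep[OF tC] .
  have "a = tree_root A"
  proof (rule ccontr)
    assume na: "a \<noteq> tree_root A"
    then obtain a' where a': "(a, a') \<in> snd A" using tr.has_par[OF tA a] by blast
    then have "vdepth A a = Suc (vdepth A a')" using tr.dep_E[OF tA a'] dA by simp
    then have "c \<noteq> tree_root C" using d dC tr.dep_r[OF tC] by auto
    then obtain c' where c': "(c, c') \<in> snd C" using tr.has_par[OF tC c] by blast
    then have "vdepth C c = Suc (vdepth C c')" using tr.dep_E[OF tC c'] dC by simp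
    have "((a, c), (a', c')) \<in> snd (tprod A C)"
      using a c d a' c' tr.inV2[OF tA a'] tr.inV2[OF tC c'] \<open>vdepth A a = Suc (vdepth A a')\<close>
        \<open>vdepth C c = Suc (vdepth C c')\<close>
      by (auto simp: tprod_def Let_def)
    then show False using ns by blast
  qed
  moreover then have "vdepth C c = 0" using d dA tr.dep_r[OF tA] by simp
  then have "c = tree_root C" using tr.dep0[OF tC c] dC by simp
  ultimately show ?thesis by simp
qed

lemma tprod_EV: "snd (tprod A B) \<subseteq> fst (tprod A B) \<times> fst (tprod A B)"
  by (auto simp: tprod_def Let_def)

lemma trunc_Dn:
  assumes tB: "tr (fst B) (snd B) (tree_root B)"
  shows "fst (trunc B (int k)) = Dn (fst B) (snd B) (tree_root B) k"
    and "snd (trunc B (int k)) = snd B \<inter> (fst (trunc B (int k)) \<times> fst (trunc B (int k)))"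
proof -
  have dB: "vdepth B = tr.dep (snd B) (tree_root B)" using vdepth_dep[OF tB] .
  show "fst (trunc B (int k)) = Dn (fst B) (snd B) (tree_root B) k"
    unfolding trunc_def Let_def Dn_def dB
    using tr.dep_eq[OF tB] tr.dep_path[OF tB] by fastforce
  show "snd (trunc B (int k)) = snd B \<inter> (fst (trunc B (int k)) \<times> fst (trunc B (int k)))"
    unfolding trunc_def Let_def by simp
qed

lemma empty_iso: "fst G = {} \<Longrightarrow> fst H = {} \<Longrightarrow> dg_iso G H"
  unfolding dg_iso_def by (auto simp: bij_betw_def)

lemma trunc_empty: "fst B = {} \<Longrightarrow> fst (trunc B k) = {}"
  by (simp add: trunc_def Let_def)

theorem mainTheorem10:
  fixes A :: "'a digraph" and B :: "'b digraph" and C :: "'c digraph"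
  assumes "is_tree A" and "is_tree B" and "is_tree C"
    and "finite (fst A)"
    and "dg_iso (tprod A B) (tprod A C)"
  shows "dg_iso (trunc B (fin_depth A)) (trunc C (fin_depth A))"
proof (cases "fst A = {}")
  case True
  then have "fin_depth A = -1" by (simp add: fin_depth_def)
  then show ?thesis by (intro empty_iso) (auto simp: trunc_def Let_def)
next
  case Ane: False
  have tA: "tr (fst A) (snd A) (tree_root A)" using is_tree_tr[OF assms(1) Ane] .
  define rA where "rA = tree_root A"
  have dA: "vdepth A = tr.dep (snd A) rA" using vdepth_dep[OF tA] rA_def by simp
  obtain f where f: "bij_betw f (fst (tprod A B)) (fst (tprod A C))"
    "\<forall>u\<in>fst (tprod A B). \<forall>v\<in>fst (tprod A B). (u, v) \<in> snd (tprod A B) \<longleftrightarrow> (f u, f v) \<in> snd (tprod A C)"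
    using assms(5) unfolding dg_iso_def by blast
  define dn where "dn = Max (vdepth A ` fst A)"
  have fd: "fin_depth A = int dn" using Ane by (simp add: fin_depth_def dn_def)
  show ?thesis
  proof (cases "fst B = {} \<or> fst C = {}")
    case True
    have rAV: "rA \<in> fst A" using tr.rV[OF tA] rA_def by simp
    have "fst B = {} \<and> fst C = {}"
    proof (cases "fst B = {}")
      case True
      then have "fst (tprod A B) = {}" by (simp add: tprod_def Let_def)
      then have e: "fst (tprod A C) = {}" using f(1) by (simp add: bij_betw_def)
      show ?thesis
      proof (rule ccontr)
        assume "\<not> ?thesis"
        then have Cne: "fst C \<noteq> {}" using True by simp
        have tC: "tr (fst C) (snd C) (tree_root C)" using is_tree_tr[OF assms(3) Cne] .
        have "(rA, tree_root C) \<in> fst (tprod A C)"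
          using rAV tr.rV[OF tC] vdepth_dep[OF tC] dA tr.dep_r[OF tC] tr.dep_r[OF tA] rA_def
          by (simp add: tprod_def Let_def)
        then show False using e by simp
      qed
    next
      case False
      then have Cem: "fst C = {}" using True by simp
      then have "fst (tprod A C) = {}" by (simp add: tprod_def Let_def)
      then have e: "fst (tprod A B) = {}" using f(1) by (simp add: bij_betw_def)
      have tB: "tr (fst B) (snd B) (tree_root B)" using is_tree_tr[OF assms(2) False] .
      have "(rA, tree_root B) \<in> fst (tprod A B)"
        using rAV tr.rV[OF tB] vdepth_dep[OF tB] dA tr.dep_r[OF tB] tr.dep_r[OF tA] rA_def
        by (simp add: tprod_def Let_def)
      then show ?thesis using e by simp
    qed
    then show ?thesis by (intro empty_iso) (simp_all add: trunc_empty)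
  next
    case False
    then have Bne: "fst B \<noteq> {}" and Cne: "fst C \<noteq> {}" by auto
    have tB: "tr (fst B) (snd B) (tree_root B)" using is_tree_tr[OF assms(2) Bne] .
    have tC: "tr (fst C) (snd C) (tree_root C)" using is_tree_tr[OF assms(3) Cne] .
    define rB where "rB = tree_root B"
    define rC where "rC = tree_root C"
    have dB: "vdepth B = tr.dep (snd B) rB" using vdepth_dep[OF tB] rB_def by simp
    have dC: "vdepth C = tr.dep (snd C) rC" using vdepth_dep[OF tC] rC_def by simp
    have rAV: "rA \<in> fst A" using tr.rV[OF tA] rA_def by simp
    have rBV: "rB \<in> fst B" using tr.rV[OF tB] rB_def by simp
    have rCV: "rC \<in> fst C" using tr.rV[OF tC] rC_def by simp
    have d0: "vdepth A rA = 0" "vdepth B rB = 0" "vdepth C rC = 0"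
      using dA dB dC tr.dep_r[OF tA] tr.dep_r[OF tB] tr.dep_r[OF tC] rA_def rB_def rC_def by auto
    have rAB: "(rA, rB) \<in> fst (tprod A B)" using rAV rBV d0 by (simp add: tprod_def Let_def)
    have frAB: "f (rA, rB) = (rA, rC)"
    proof -
      obtain a c where ac: "f (rA, rB) = (a, c)" by fastforce
      have acV: "(a, c) \<in> fst (tprod A C)" using f(1) rAB ac by (metis bij_betw_apply)
      have "\<forall>y. ((a, c), y) \<notin> snd (tprod A C)"
      proof (intro allI notI)
        fix y assume y: "((a, c), y) \<in> snd (tprod A C)"
        then have "y \<in> fst (tprod A C)" using tprod_EV by blast
        then obtain z where z: "z \<in> fst (tprod A B)" "f z = y" using f(1) by (metis bij_betw_iff_bijections)
        then have "((rA, rB), z) \<in> snd (tprod A B)" using f(2) rAB y ac by auto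
        then have "(rA, fst z) \<in> snd A" by (auto simp: tprod_def Let_def)
        then show False using tr.rsink[OF tA] rA_def by blast
      qed
      then show ?thesis using tprod_sink[OF tA tC acV] ac rA_def rC_def by simp
    qed
    have codeEq: "code (tprod A B) dn (rA, rB) = code (tprod A C) dn (rA, rC)"
      using code_iso[OF tprod_EV tprod_EV f(1) f(2) rAB, of dn] unfolding frAB .
    have "dn \<in> vdepth A ` fst A" unfolding dn_def using assms(4) Ane by (intro Max_in) auto
    then obtain aa where aa: "aa \<in> fst A" "vdepth A aa = dn" by blast
    have path: "(aa, rA) \<in> snd A ^^ dn" using tr.dep_path[OF tA aa(1)] aa(2) dA rA_def by simp
    have finA: "\<And>c. finite (ch A c)" using tr.fin[OF tA] by (simp add: ch_def)
    have homeq: "hom x (code B dn rB) = hom x (code C dn rC)" for x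
    proof (cases "ht x \<le> dn")
      case True
      have pos: "0 < hom x (code A dn rA)" using hom_pos[OF finA path True True] .
      have e1: "hom x (code (tprod A B) dn (rA, rB)) = hom x (code A dn rA) * hom x (code B dn rB)"
        using hom_prod[OF tA tB rAV rBV] d0 by simp
      have e2: "hom x (code (tprod A C) dn (rA, rC)) = hom x (code A dn rA) * hom x (code C dn rC)"
        using hom_prod[OF tA tC rAV rCV] d0 by simp
      have "hom x (code A dn rA) * hom x (code B dn rB) = hom x (code A dn rA) * hom x (code C dn rC)"
        using e1 e2 codeEq by metis
      then show ?thesis using pos by simp
    next
      case False
      have "ht (code B dn rB) < ht x" using ht_code[of B dn rB] False by simp
      moreover have "ht (code C dn rC) < ht x" using ht_code[of C dn rC] False by simp
      ultimately show ?thesis using hom_zero by simp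
    qed
    have "code B dn rB = code C dn rC" using hom_det homeq by blast
    then have ce: "code (fst B, snd B) dn rB = code (fst C, snd C) dn rC" by simp
    obtain \<phi> where \<phi>: "bij_betw \<phi> (Dn (fst B) (snd B) rB dn) (Dn (fst C) (snd C) rC dn)"
      "\<forall>u\<in>Dn (fst B) (snd B) rB dn. \<forall>u'\<in>Dn (fst B) (snd B) rB dn. (u, u') \<in> snd B \<longleftrightarrow> (\<phi> u, \<phi> u') \<in> snd C"
      using iso_D[OF tB tC rBV rCV ce] by blast
    have TB: "fst (trunc B (int dn)) = Dn (fst B) (snd B) rB dn"
      "snd (trunc B (int dn)) = snd B \<inter> (fst (trunc B (int dn)) \<times> fst (trunc B (int dn)))"
      using trunc_Dn[OF tB] rB_def by auto
    have TC: "fst (trunc C (int dn)) = Dn (fst C) (snd C) rC dn"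
      "snd (trunc C (int dn)) = snd C \<inter> (fst (trunc C (int dn)) \<times> fst (trunc C (int dn)))"
      using trunc_Dn[OF tC] rC_def by auto
    show ?thesis
      unfolding fd dg_iso_def
    proof (intro exI[of _ \<phi>] conjI ballI)
      show "bij_betw \<phi> (fst (trunc B (int dn))) (fst (trunc C (int dn)))" using \<phi>(1) TB TC by simp
      fix u v assume u: "u \<in> fst (trunc B (int dn))" and v: "v \<in> fst (trunc B (int dn))"
      have "\<phi> u \<in> fst (trunc C (int dn))" "\<phi> v \<in> fst (trunc C (int dn))"
        using u v \<phi>(1) TB TC by (auto dest: bij_betw_apply)
      then show "(u, v) \<in> snd (trunc B (int dn)) \<longleftrightarrow> (\<phi> u, \<phi> v) \<in> snd (trunc C (int dn))"
        using u v \<phi>(2) TB TC by auto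
    qed
  qed
qed


end
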